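(* Let $D$ be a normal binary delta-matroid whose intersection graph $G_D$ is the complete simple graph $K_v$ on $v\ge1$ vertices (no loops). Then ${}^{\partial}w_{D}(z)=2^{v}z^{v-1}$ if $v$ is odd, and ${}^{\partial}w_{D}(z)=2^{v-1}z^{v}+2^{v-1}z^{v-2}$ if $v$ is even.
   Context: A delta-matroid is a set system $(E,\mathcal{F})$, $\mathcal{F}\ne\emptyset$ a family of subsets of finite $E$, satisfying: for all $X,Y\in\mathcal{F}$ and $u\in X\Delta Y$ there is $v\in X\Delta Y$ with $X\Delta\{u,v\}\in\mathcal{F}$. Twist: $D*A=(E,\{A\Delta X:X\in\mathcal{F}\})$. Width $w(D)$ = maximum minus minimum cardinality of feasible sets; twist polynomial ${}^{\partial}w_{D}(z)=\sum_{A\subseteq E}z^{w(D*A)}$. $D$ is normal if $\emptyset\in\mathcal{F}$. For a symmetric matrix $C$ over $GF(2)$ indexed by $E$, $D(C)=(E,\{A\subseteq E: C[A]\text{ nonsingular}\})$ ($C[A]$ principal submatrix, $C[\emptyset]$ nonsingular by convention). $D$ is binary if some twist of it is isomorphic to some $D(C)$. A normal binary $D$ equals $D(C)$ for a unique symmetric $C$; its intersection graph $G_D$ has vertex set $E$, distinct $u,v$ adjacent iff $C_{u,v}=1$, and a loop at $v$ iff $C_{v,v}=1$. *)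

theory Defs
  imports "HOL-Computational_Algebra.Polynomial"
begin

definition symdiff :: "'a set \<Rightarrow> 'a set \<Rightarrow> 'a set" (infixl "\<triangle>" 70) where
  "X \<triangle> Y = (X - Y) \<union> (Y - X)"

definition delta_matroid :: "'a set \<Rightarrow> 'a set set \<Rightarrow> bool" where
  "delta_matroid E F \<longleftrightarrow> finite E \<and> F \<subseteq> Pow E \<and> F \<noteq> {} \<and>
     (\<forall>X\<in>F. \<forall>Y\<in>F. \<forall>u\<in>X \<triangle> Y. \<exists>v\<in>X \<triangle> Y. X \<triangle> {u, v} \<in> F)"

definition twist :: "'a set set \<Rightarrow> 'a set \<Rightarrow> 'a set set" where
  "twist F A = (\<lambda>X. A \<triangle> X) ` F"

definition width :: "'a set set \<Rightarrow> nat" where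
  "width F = Max (card ` F) - Min (card ` F)"

definition twist_poly :: "'a set \<Rightarrow> 'a set set \<Rightarrow> int poly" where
  "twist_poly E F = (\<Sum>A\<in>Pow E. monom 1 (width (twist F A)))"

definition normal :: "'a set set \<Rightarrow> bool" where
  "normal F \<longleftrightarrow> {} \<in> F"

text \<open>Symmetric matrices over GF(2) indexed by E, as boolean-valued functions
  (True = 1), zero outside E.\<close>

definition sym_matrix_on :: "'a set \<Rightarrow> ('a \<Rightarrow> 'a \<Rightarrow> bool) \<Rightarrow> bool" where
  "sym_matrix_on E C \<longleftrightarrow> (\<forall>u v. C u v = C v u) \<and>
     (\<forall>u v. \<not> (u \<in> E \<and> v \<in> E) \<longrightarrow> \<not> C u v)"

text \<open>The principal submatrix C[A] (A finite) is nonsingular over GF(2) iff its kernel is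
  trivial: the only X \<subseteq> A (a 0/1 vector supported on A) with C[A] x = 0 is X = {}.
  For A = {} this holds, matching the convention that C[{}] is nonsingular.\<close>

definition nonsingular_principal :: "('a \<Rightarrow> 'a \<Rightarrow> bool) \<Rightarrow> 'a set \<Rightarrow> bool" where
  "nonsingular_principal C A \<longleftrightarrow>
     (\<forall>X\<subseteq>A. (\<forall>i\<in>A. even (card {j\<in>X. C i j})) \<longrightarrow> X = {})"

definition DC :: "'a set \<Rightarrow> ('a \<Rightarrow> 'a \<Rightarrow> bool) \<Rightarrow> 'a set set" where
  "DC E C = {A. A \<subseteq> E \<and> nonsingular_principal C A}"

definition binary_dm :: "'a set \<Rightarrow> 'a set set \<Rightarrow> bool" where
  "binary_dm E F \<longleftrightarrow> (\<exists>A\<subseteq>E. \<exists>E' C (f :: 'a \<Rightarrow> 'a). bij_betw f E E' \<and> sym_matrix_on E' C \<and>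
      (\<lambda>X. f ` X) ` twist F A = DC E' C)"

text \<open>Intersection graph of a normal binary delta-matroid: adjacency given by the unique
  symmetric C with F = D(C). (u adjacent to v for u \<noteq> v, loop at v if C v v.)\<close>

definition intersection_matrix :: "'a set \<Rightarrow> 'a set set \<Rightarrow> 'a \<Rightarrow> 'a \<Rightarrow> bool" where
  "intersection_matrix E F = (THE C. sym_matrix_on E C \<and> F = DC E C)"

end

theory Submission
  imports Defs
begin


definition mv :: "('a \<Rightarrow> 'a \<Rightarrow> bool) \<Rightarrow> 'a set \<Rightarrow> 'a set" where
  "mv C X = {i. odd (card {j\<in>X. C i j})}"

lemma card_symdiff_parity:
  assumes "finite X" "finite Y"
  shows "card (X \<triangle> Y) + 2 * card (X \<inter> Y) = card X + card Y"
proof -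
  have "X \<triangle> Y = (X - Y) \<union> (Y - X)" by (simp add: symdiff_def)
  hence "card (X \<triangle> Y) = card (X - Y) + card (Y - X)"
    using assms by (simp add: card_Un_disjoint Diff_Int_distrib2 disjoint_iff)
  moreover have "card X = card (X - Y) + card (X \<inter> Y)"
    using assms by (metis Int_commute card_Diff_subset_Int card_Un_disjoint Diff_disjoint Int_Diff_disjoint Un_Diff_Int finite_Diff finite_Int sup_commute)
  moreover have "card Y = card (Y - X) + card (X \<inter> Y)"
    using assms by (metis Int_commute Int_Diff_disjoint Un_Diff_Int card_Un_disjoint finite_Diff finite_Int)
  ultimately show ?thesis by simp
qed

lemma even_card_symdiff:
  assumes "finite X" "finite Y"
  shows "even (card (X \<triangle> Y)) = (even (card X) = even (card Y))"
  using card_symdiff_parity[OF assms] by (metis even_add even_mult_iff even_numeral)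

lemma symdiff_filter: "{j\<in>X \<triangle> Y. P j} = {j\<in>X. P j} \<triangle> {j\<in>Y. P j}"
  by (auto simp: symdiff_def)

lemma mv_symdiff:
  assumes "finite X" "finite Y"
  shows "mv C (X \<triangle> Y) = mv C X \<triangle> mv C Y"
proof -
  have "\<And>i. odd (card {j\<in>X \<triangle> Y. C i j}) = (odd (card {j\<in>X. C i j}) \<noteq> odd (card {j\<in>Y. C i j}))"
    using even_card_symdiff[of "{j\<in>X. C i j}" "{j\<in>Y. C i j}" for i] assms
    by (simp add: symdiff_filter)
  thus ?thesis by (auto simp: mv_def symdiff_def)
qed

lemma mv_empty[simp]: "mv C {} = {}" by (simp add: mv_def)

lemma mv_sub: "sym_matrix_on E C \<Longrightarrow> mv C X \<subseteq> E"
proof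
  fix i assume s: "sym_matrix_on E C" and i: "i \<in> mv C X"
  show "i \<in> E"
  proof (rule ccontr)
    assume "i \<notin> E"
    hence "{j\<in>X. C i j} = {}" using s by (auto simp: sym_matrix_on_def)
    hence "card {j\<in>X. C i j} = 0" by (simp only: card.empty)
    thus False using i by (simp add: mv_def)
  qed
qed

lemma nonsing_mv:
  "nonsingular_principal C A \<longleftrightarrow> (\<forall>X\<subseteq>A. A \<inter> mv C X = {} \<longrightarrow> X = {})"
  unfolding nonsingular_principal_def mv_def by blast

definition feas :: "('a set \<times> 'a set) set \<Rightarrow> 'a set \<Rightarrow> bool" where
  "feas L B \<longleftrightarrow> (\<forall>X Y. (X,Y) \<in> L \<longrightarrow> X \<subseteq> B \<longrightarrow> Y \<inter> B = {} \<longrightarrow> X = {} \<and> Y = {})"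

definition swp :: "'a set \<Rightarrow> 'a set \<times> 'a set \<Rightarrow> 'a set \<times> 'a set" where
  "swp A P = ((fst P - A) \<union> (snd P \<inter> A), (snd P - A) \<union> (fst P \<inter> A))"

definition Lg :: "'a set \<Rightarrow> ('a \<Rightarrow> 'a \<Rightarrow> bool) \<Rightarrow> ('a set \<times> 'a set) set" where
  "Lg E C = (\<lambda>X. (X, mv C X)) ` Pow E"

lemma swp_swp[simp]: "swp A (swp A P) = P"
  by (cases P) (auto simp: swp_def)

lemma feas_swp: "feas (swp A ` L) B \<longleftrightarrow> feas L (A \<triangle> B)"
proof -
  have key: "\<And>X Y. (fst (swp A (X,Y)) \<subseteq> B \<and> snd (swp A (X,Y)) \<inter> B = {}) \<longleftrightarrow>
     (X \<subseteq> A \<triangle> B \<and> Y \<inter> (A \<triangle> B) = {})"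
    by (auto simp: swp_def symdiff_def)
  have key2: "\<And>X Y. (fst (swp A (X,Y)) = {} \<and> snd (swp A (X,Y)) = {}) \<longleftrightarrow> (X = {} \<and> Y = {})"
    by (auto simp: swp_def)
  show ?thesis
  proof
    assume h: "feas (swp A ` L) B"
    show "feas L (A \<triangle> B)" unfolding feas_def
    proof (intro allI impI)
      fix X Y assume "(X,Y) \<in> L" "X \<subseteq> A \<triangle> B" "Y \<inter> (A \<triangle> B) = {}"
      moreover have "swp A (X,Y) \<in> swp A ` L" using calculation by blast
      ultimately show "X = {} \<and> Y = {}" using h key[of X Y] key2[of X Y] unfolding feas_def
        by (metis prod.collapse)
    qed
  next
    assume h: "feas L (A \<triangle> B)"
    show "feas (swp A ` L) B" unfolding feas_def
    proof (intro allI impI)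
      fix X Y assume "(X,Y) \<in> swp A ` L" "X \<subseteq> B" "Y \<inter> B = {}"
      then obtain X0 Y0 where p: "(X0,Y0) \<in> L" "(X,Y) = swp A (X0,Y0)" by auto
      show "X = {} \<and> Y = {}" using h p key[of X0 Y0] key2[of X0 Y0] \<open>X \<subseteq> B\<close> \<open>Y \<inter> B = {}\<close>
        unfolding feas_def by (metis fst_conv snd_conv)
    qed
  qed
qed

lemma feas_Lg:
  assumes "finite E" "B \<subseteq> E"
  shows "feas (Lg E C) B \<longleftrightarrow> nonsingular_principal C B"
proof
  assume h: "feas (Lg E C) B"
  show "nonsingular_principal C B" unfolding nonsing_mv
  proof (intro allI impI)
    fix X assume "X \<subseteq> B" "B \<inter> mv C X = {}"
    moreover have "(X, mv C X) \<in> Lg E C" using calculation assms by (auto simp: Lg_def)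
    moreover have "mv C X \<inter> B = {}" using calculation by blast
    ultimately show "X = {}" using h unfolding feas_def by blast
  qed
next
  assume h: "nonsingular_principal C B"
  show "feas (Lg E C) B" unfolding feas_def
  proof (intro allI impI)
    fix X Y assume XY: "(X,Y) \<in> Lg E C" "X \<subseteq> B" "Y \<inter> B = {}"
    hence Y: "Y = mv C X" by (auto simp: Lg_def)
    hence "B \<inter> mv C X = {}" using XY by blast
    hence "X = {}" using h XY unfolding nonsing_mv by blast
    thus "X = {} \<and> Y = {}" using Y by simp
  qed
qed

lemma DC_feas:
  assumes "finite E"
  shows "DC E C = {B. B \<subseteq> E \<and> feas (Lg E C) B}"
  using feas_Lg[OF assms] by (auto simp: DC_def)

lemma graph_lemma:
  assumes fin: "finite E" and sub: "L \<subseteq> Pow E \<times> Pow E"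
    and cl: "\<And>X Y X' Y'. (X,Y) \<in> L \<Longrightarrow> (X',Y') \<in> L \<Longrightarrow> (X \<triangle> X', Y \<triangle> Y') \<in> L"
    and cardL: "card L = 2 ^ card E"
    and f0: "feas L {}"
    and iso: "\<And>X Y X' Y'. (X,Y) \<in> L \<Longrightarrow> (X',Y') \<in> L \<Longrightarrow> even (card (X \<inter> Y') + card (Y \<inter> X'))"
  shows "\<exists>C. sym_matrix_on E C \<and> L = Lg E C"
proof -
  have finL: "finite L" using sub fin by (meson finite_Pow_iff finite_SigmaI finite_subset)
  have uniq: "Y = Y'" if "(X,Y) \<in> L" "(X,Y') \<in> L" for X Y Y'
  proof -
    have "({}, Y \<triangle> Y') \<in> L" using cl[OF that] by (simp add: symdiff_def)
    hence "Y \<triangle> Y' = {}" using f0 unfolding feas_def by blast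
    thus ?thesis by (auto simp: symdiff_def)
  qed
  have inj: "inj_on fst L" unfolding inj_on_def using uniq by (metis prod.collapse)
  have "fst ` L \<subseteq> Pow E" using sub by force
  moreover have "card (fst ` L) = card (Pow E)" using card_image[OF inj] cardL fin by (simp add: card_Pow)
  ultimately have imgE: "fst ` L = Pow E" using fin by (simp add: card_subset_eq)
  define g where "g X = (THE Y. (X,Y) \<in> L)" for X
  have gL: "(X, g X) \<in> L" if "X \<subseteq> E" for X
  proof -
    have "X \<in> fst ` L" using imgE that by simp
    then obtain P where P: "P \<in> L" "X = fst P" by (rule imageE)
    obtain Y where Y: "(X,Y) \<in> L" using P by (cases P) auto
    show ?thesis unfolding g_def by (rule theI[where P="\<lambda>Y. (X,Y) \<in> L", OF Y]) (erule uniq, rule Y)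
  qed
  have gE: "g X \<subseteq> E" if "X \<subseteq> E" for X using gL[OF that] sub by auto
  have gs: "g (X \<triangle> X') = g X \<triangle> g X'" if "X \<subseteq> E" "X' \<subseteq> E" for X X'
  proof -
    have "X \<triangle> X' \<subseteq> E" using that by (auto simp: symdiff_def)
    thus ?thesis using uniq cl[OF gL[OF that(1)] gL[OF that(2)]] gL by blast
  qed
  have g0: "g {} = {}"
  proof -
    have "({}, g {}) \<in> L" using gL by simp
    thus ?thesis using f0 unfolding feas_def by blast
  qed
  define C where "C i j = (i \<in> E \<and> j \<in> E \<and> i \<in> g {j})" for i j
  have gmv: "g X = mv C X" if "X \<subseteq> E" for X
  proof -
    have fX: "finite X" using that fin finite_subset by auto
    from fX that show ?thesis
    proof (induction X rule: finite_subset_induct')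
      case empty show ?case using g0 by simp
    next
      case (insert x X)
      have ins: "insert x X = {x} \<triangle> X" using insert by (auto simp: symdiff_def)
      have xE: "{x} \<subseteq> E" using insert by simp
      have sx: "{j\<in>{x}. C i j} = (if C i x then {x} else {})" for i by auto
      have "mv C {x} = {i. C i x}" unfolding mv_def sx by simp
      also have "\<dots> = g {x}" using gE[OF xE] insert unfolding C_def by auto
      finally have "mv C {x} = g {x}" .
      hence "mv C (insert x X) = g {x} \<triangle> g X"
        using ins mv_symdiff[of "{x}" X C] insert by simp
      thus ?case using gs[OF xE insert(3)] ins by simp
    qed
  qed
  have symm: "C i j = C j i" for i j
  proof (cases "i \<in> E \<and> j \<in> E")
    case True
    have "even (card ({i} \<inter> g {j}) + card (g {i} \<inter> {j}))"
      using iso[OF gL gL] True by simp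
    thus ?thesis unfolding C_def using True by (cases "i \<in> g {j}"; cases "j \<in> g {i}"; auto)
  next
    case False thus ?thesis by (auto simp: C_def)
  qed
  have smo: "sym_matrix_on E C" unfolding sym_matrix_on_def using symm by (auto simp: C_def)
  have "L = Lg E C"
  proof
    show "L \<subseteq> Lg E C"
    proof
      fix P assume P: "P \<in> L"
      obtain X Y where XY: "P = (X,Y)" by fastforce
      have X: "X \<subseteq> E" using P XY sub by auto
      have "Y = g X" using uniq P XY gL[OF X] by blast
      thus "P \<in> Lg E C" using XY X gmv[OF X] by (auto simp: Lg_def)
    qed
  next
    show "Lg E C \<subseteq> L" using gL gmv by (auto simp: Lg_def)
  qed
  thus ?thesis using smo by blast
qed

lemma even_sum_card:
  assumes "finite X"
  shows "even (sum f X) = even (card {i\<in>X. odd ((f i)::nat)})"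
  using assms
proof (induction X rule: finite_induct)
  case empty then show ?case by simp
next
  case (insert x X)
  have "{i\<in>insert x X. odd (f i)} = (if odd (f x) then insert x {i\<in>X. odd (f i)} else {i\<in>X. odd (f i)})"
    by auto
  moreover have "x \<notin> {i\<in>X. odd (f i)}" using insert by auto
  ultimately show ?case using insert by auto
qed

lemma card_filter_sum:
  assumes "finite X" shows "card {j\<in>X. P j} = (\<Sum>j\<in>X. (of_bool (P j) :: nat))"
proof -
  have e: "X \<inter> {x. P x} = {j\<in>X. P j}" by auto
  have "(\<Sum>j\<in>X. (of_bool (P j) :: nat)) = of_nat (card (X \<inter> {x. P x}))"
    using assms by simp
  thus ?thesis by (simp only: e of_nat_id)
qed

lemma Lg_iso:
  assumes sym: "sym_matrix_on E C" and X: "finite X" and X': "finite X'"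
  shows "even (card (X \<inter> mv C X') + card (mv C X \<inter> X'))"
proof -
  have c1: "X \<inter> mv C X' = {i\<in>X. odd (card {j\<in>X'. C i j})}" by (auto simp: mv_def)
  have c2: "mv C X \<inter> X' = {j\<in>X'. odd (card {i\<in>X. C j i})}" by (auto simp: mv_def)
  have p1: "even (card (X \<inter> mv C X')) = even (\<Sum>i\<in>X. card {j\<in>X'. C i j})"
    using c1 even_sum_card[OF X] by simp
  have p2: "even (card (mv C X \<inter> X')) = even (\<Sum>j\<in>X'. card {i\<in>X. C j i})"
    using c2 even_sum_card[OF X'] by simp
  have "(\<Sum>i\<in>X. card {j\<in>X'. C i j}) = (\<Sum>i\<in>X. \<Sum>j\<in>X'. (of_bool (C i j)::nat))"
    using card_filter_sum[OF X'] by simp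
  also have "\<dots> = (\<Sum>j\<in>X'. \<Sum>i\<in>X. (of_bool (C i j)::nat))" by (rule sum.swap)
  also have "\<dots> = (\<Sum>j\<in>X'. \<Sum>i\<in>X. (of_bool (C j i)::nat))"
    using sym by (simp add: sym_matrix_on_def)
  also have "\<dots> = (\<Sum>j\<in>X'. card {i\<in>X. C j i})"
    using card_filter_sum[OF X] by simp
  finally show ?thesis using p1 p2 by simp
qed

lemma card_split: "finite S \<Longrightarrow> card S = card (S \<inter> A) + card (S - A)"
  by (rule card_Int_Diff)

lemma swp_form:
  assumes "finite X1" "finite Y1" "finite X2" "finite Y2"
  shows "card (fst (swp A (X1,Y1)) \<inter> snd (swp A (X2,Y2))) + card (snd (swp A (X1,Y1)) \<inter> fst (swp A (X2,Y2)))
       = card (X1 \<inter> Y2) + card (Y1 \<inter> X2)"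
proof -
  let ?S1 = "fst (swp A (X1,Y1)) \<inter> snd (swp A (X2,Y2))"
  let ?S2 = "snd (swp A (X1,Y1)) \<inter> fst (swp A (X2,Y2))"
  have f1: "finite ?S1" "finite ?S2" using assms by (auto simp: swp_def)
  have a1: "?S1 \<inter> A = Y1 \<inter> X2 \<inter> A" "?S1 - A = X1 \<inter> Y2 - A" by (auto simp: swp_def)
  have a2: "?S2 \<inter> A = X1 \<inter> Y2 \<inter> A" "?S2 - A = Y1 \<inter> X2 - A" by (auto simp: swp_def)
  show ?thesis
    using card_split[OF f1(1), of A] card_split[OF f1(2), of A] a1 a2
      card_split[of "X1 \<inter> Y2" A] card_split[of "Y1 \<inter> X2" A] assms by simp
qed

lemma swp_symdiff: "swp A (X \<triangle> X', Y \<triangle> Y') = (fst (swp A (X,Y)) \<triangle> fst (swp A (X',Y')), snd (swp A (X,Y)) \<triangle> snd (swp A (X',Y')))"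
  by (auto simp: swp_def symdiff_def)

lemma Lg_swpE:
  assumes "(X,Y) \<in> swp A ` Lg E C"
  obtains Z where "Z \<subseteq> E" "(X,Y) = swp A (Z, mv C Z)"
proof -
  from assms obtain P where P1: "(X,Y) = swp A P" and P2: "P \<in> Lg E C" by (rule imageE)
  from P2 obtain Z where Z1: "P = (Z, mv C Z)" and Z2: "Z \<in> Pow E" unfolding Lg_def by (rule imageE)
  show ?thesis using that[of Z] Z1 Z2 P1 by simp
qed

lemma normal_twist_Lg:
  assumes fin: "finite E" and sym: "sym_matrix_on E C0"
    and f0: "feas (swp A ` Lg E C0) {}"
  shows "\<exists>C. sym_matrix_on E C \<and> swp A ` Lg E C0 = Lg E C"
proof (rule graph_lemma[OF fin])
  let ?L = "swp A ` Lg E C0"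
  show "?L \<subseteq> Pow E \<times> Pow E"
  proof
    fix P assume "P \<in> ?L"
    moreover obtain X Y where XY: "P = (X,Y)" by fastforce
    ultimately obtain Z where Z: "Z \<subseteq> E" "(X,Y) = swp A (Z, mv C0 Z)" using Lg_swpE by metis
    have "mv C0 Z \<subseteq> E" by (rule mv_sub[OF sym])
    thus "P \<in> Pow E \<times> Pow E" using Z XY unfolding swp_def by auto
  qed
  show "(X \<triangle> X', Y \<triangle> Y') \<in> ?L" if h: "(X,Y) \<in> ?L" "(X',Y') \<in> ?L" for X Y X' Y'
  proof -
    obtain Z where Z: "Z \<subseteq> E" "(X,Y) = swp A (Z, mv C0 Z)" using h(1) by (rule Lg_swpE)
    obtain Z' where Z': "Z' \<subseteq> E" "(X',Y') = swp A (Z', mv C0 Z')" using h(2) by (rule Lg_swpE)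
    have fz: "finite Z" "finite Z'" using Z Z' fin finite_subset by auto
    have "Z \<triangle> Z' \<subseteq> E" using Z Z' by (auto simp: symdiff_def)
    hence "(Z \<triangle> Z', mv C0 Z \<triangle> mv C0 Z') \<in> Lg E C0"
      using mv_symdiff[OF fz] by (auto simp: Lg_def)
    hence "swp A (Z \<triangle> Z', mv C0 Z \<triangle> mv C0 Z') \<in> ?L" by blast
    thus ?thesis using swp_symdiff[of A Z Z' "mv C0 Z" "mv C0 Z'"] Z Z'
      by (metis fst_conv snd_conv)
  qed
  have injL: "inj_on (\<lambda>X. (X, mv C0 X)) (Pow E)" by (auto simp: inj_on_def)
  have injS: "inj_on (swp A) (Lg E C0)" by (metis inj_on_inverseI swp_swp)
  show "card ?L = 2 ^ card E"
    using card_image[OF injS] card_image[OF injL] fin by (simp add: Lg_def card_Pow)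
  show "feas ?L {}" by (rule f0)
  show "even (card (X \<inter> Y') + card (Y \<inter> X'))" if h: "(X,Y) \<in> ?L" "(X',Y') \<in> ?L" for X Y X' Y'
  proof -
    obtain Z where Z: "Z \<subseteq> E" "(X,Y) = swp A (Z, mv C0 Z)" using h(1) by (rule Lg_swpE)
    obtain Z' where Z': "Z' \<subseteq> E" "(X',Y') = swp A (Z', mv C0 Z')" using h(2) by (rule Lg_swpE)
    have fz: "finite Z" "finite Z'" using Z Z' fin finite_subset by auto
    have fm: "finite (mv C0 Z)" "finite (mv C0 Z')" using finite_subset[OF mv_sub[OF sym] fin] by auto
    have "card (X \<inter> Y') + card (Y \<inter> X') = card (Z \<inter> mv C0 Z') + card (mv C0 Z \<inter> Z')"
      using swp_form[OF fz(1) fm(1) fz(2) fm(2), of A] Z Z' by (metis fst_conv snd_conv)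
    thus ?thesis using Lg_iso[OF sym fz] by simp
  qed
qed

lemma symdiff_invol[simp]: "A \<triangle> (A \<triangle> X) = X"
  by (auto simp: symdiff_def)

lemma twist_twist: "twist (twist F A) A = F"
  by (simp add: twist_def image_image)

lemma transport_nonsing:
  fixes C :: "'b \<Rightarrow> 'b \<Rightarrow> bool" and f :: "'a \<Rightarrow> 'b"
  assumes inj: "inj_on f E" and B: "B \<subseteq> E"
  defines "C0 \<equiv> \<lambda>u w. u \<in> E \<and> w \<in> E \<and> C (f u) (f w)"
  shows "nonsingular_principal C (f ` B) \<longleftrightarrow> nonsingular_principal C0 B"
proof -
  have key: "(f i \<in> mv C (f ` X)) \<longleftrightarrow> (i \<in> mv C0 X)" if "i \<in> E" "X \<subseteq> E" for i X
  proof -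
    have "{j\<in>f ` X. C (f i) j} = f ` {j\<in>X. C0 i j}" using that unfolding C0_def by blast
    moreover have "inj_on f {j\<in>X. C0 i j}" by (rule inj_on_subset[OF inj]) (use that in auto)
    ultimately have "card {j\<in>f ` X. C (f i) j} = card {j\<in>X. C0 i j}" by (simp add: card_image)
    thus ?thesis by (simp add: mv_def)
  qed
  have eq: "(f ` B \<inter> mv C (f ` X) = {}) \<longleftrightarrow> (B \<inter> mv C0 X = {})" if "X \<subseteq> B" for X
  proof -
    have XE: "X \<subseteq> E" using that B by auto
    have "(f ` B \<inter> mv C (f ` X) = {}) \<longleftrightarrow> (\<forall>i\<in>B. f i \<notin> mv C (f ` X))" by blast
    also have "\<dots> \<longleftrightarrow> (\<forall>i\<in>B. i \<notin> mv C0 X)"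
      using key[OF subsetD[OF B] XE] by simp
    also have "\<dots> \<longleftrightarrow> (B \<inter> mv C0 X = {})" by blast
    finally show ?thesis .
  qed
  show ?thesis unfolding nonsing_mv
  proof
    assume h: "\<forall>X\<subseteq>f ` B. f ` B \<inter> mv C X = {} \<longrightarrow> X = {}"
    show "\<forall>X\<subseteq>B. B \<inter> mv C0 X = {} \<longrightarrow> X = {}"
    proof (intro allI impI)
      fix X assume X: "X \<subseteq> B" "B \<inter> mv C0 X = {}"
      have "f ` X \<subseteq> f ` B" using X(1) by (rule image_mono)
      moreover have "f ` B \<inter> mv C (f ` X) = {}" using eq[OF X(1)] X(2) by simp
      ultimately have "f ` X = {}" by (rule h[rule_format])
      thus "X = {}" by simp
    qed
  next
    assume h: "\<forall>X\<subseteq>B. B \<inter> mv C0 X = {} \<longrightarrow> X = {}"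
    show "\<forall>X\<subseteq>f ` B. f ` B \<inter> mv C X = {} \<longrightarrow> X = {}"
    proof (intro allI impI)
      fix X' assume X': "X' \<subseteq> f ` B" "f ` B \<inter> mv C X' = {}"
      then obtain X where X: "X \<subseteq> B" "X' = f ` X" by (meson subset_imageE)
      have "B \<inter> mv C0 X = {}" using eq[OF X(1)] X' X(2) by simp
      hence "X = {}" by (rule h[rule_format, OF X(1)])
      thus "X' = {}" using X(2) by simp
    qed
  qed
qed

lemma normal_binary_DC:
  assumes dm: "delta_matroid E F" and nm: "normal F" and bn: "binary_dm E F"
  shows "\<exists>C. sym_matrix_on E C \<and> F = DC E C"
proof -
  have fin: "finite E" and FE: "F \<subseteq> Pow E" using dm by (auto simp: delta_matroid_def)
  obtain A where A: "A \<subseteq> E" and ex: "\<exists>E' C (f :: 'a \<Rightarrow> 'a). bij_betw f E E' \<and> sym_matrix_on E' C \<and>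
      (\<lambda>X. f ` X) ` twist F A = DC E' C"
    using bn unfolding binary_dm_def by (elim exE conjE) (rule that, assumption, blast)
  obtain E' C and f :: "'a \<Rightarrow> 'a" where bij: "bij_betw f E E'"
    and sm: "sym_matrix_on E' C" and img: "(\<lambda>X. f ` X) ` twist F A = DC E' C"
    using ex by (elim exE conjE) (rule that)
  have inj: "inj_on f E" using bij by (simp add: bij_betw_def)
  have fE: "f ` E = E'" using bij by (simp add: bij_betw_def)
  define C0 where "C0 = (\<lambda>u w. u \<in> E \<and> w \<in> E \<and> C (f u) (f w))"
  have sm0: "sym_matrix_on E C0" using sm unfolding sym_matrix_on_def C0_def by auto
  have GE: "twist F A \<subseteq> Pow E" using FE A by (auto simp: twist_def symdiff_def)
  have G: "twist F A = DC E C0"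
  proof
    show "twist F A \<subseteq> DC E C0"
    proof
      fix B assume B: "B \<in> twist F A"
      hence BE: "B \<subseteq> E" using GE by auto
      have "f ` B \<in> DC E' C" using img B by blast
      hence "nonsingular_principal C (f ` B)" by (simp add: DC_def)
      thus "B \<in> DC E C0" using transport_nonsing[OF inj BE, of C] BE by (simp add: DC_def C0_def)
    qed
  next
    show "DC E C0 \<subseteq> twist F A"
    proof
      fix B assume B: "B \<in> DC E C0"
      hence BE: "B \<subseteq> E" and ns: "nonsingular_principal C0 B" by (auto simp: DC_def)
      have "nonsingular_principal C (f ` B)" using transport_nonsing[OF inj BE, of C] ns by (simp add: C0_def)
      moreover have "f ` B \<subseteq> E'" using BE fE by auto
      ultimately have "f ` B \<in> (\<lambda>X. f ` X) ` twist F A" using img by (simp add: DC_def)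
      then obtain B' where B': "B' \<in> twist F A" "f ` B = f ` B'" by auto
      have "B' \<subseteq> E" using B' GE by auto
      hence "B = B'" using inj_on_image_eq_iff[OF inj BE] B' by blast
      thus "B \<in> twist F A" using B' by simp
    qed
  qed
  let ?L = "swp A ` Lg E C0"
  have Fchar: "F = {B. B \<subseteq> E \<and> feas ?L B}"
  proof -
    have "F = twist (DC E C0) A" using twist_twist[of F A] G by simp
    also have "\<dots> = {B. B \<subseteq> E \<and> feas ?L B}"
    proof
      show "twist (DC E C0) A \<subseteq> {B. B \<subseteq> E \<and> feas ?L B}"
      proof
        fix B assume "B \<in> twist (DC E C0) A"
        then obtain B0 where B0: "B0 \<in> DC E C0" "B = A \<triangle> B0" by (auto simp: twist_def)
        have B0E: "B0 \<subseteq> E" "feas (Lg E C0) B0" using B0(1) by (auto simp: DC_feas[OF fin])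
        have "B \<subseteq> E" using B0(2) B0E A by (auto simp: symdiff_def)
        moreover have "feas ?L B" unfolding feas_swp using B0(2) B0E by simp
        ultimately show "B \<in> {B. B \<subseteq> E \<and> feas ?L B}" by simp
      qed
    next
      show "{B. B \<subseteq> E \<and> feas ?L B} \<subseteq> twist (DC E C0) A"
      proof
        fix B assume "B \<in> {B. B \<subseteq> E \<and> feas ?L B}"
        hence "B \<subseteq> E" "feas (Lg E C0) (A \<triangle> B)" by (auto simp: feas_swp)
        hence "A \<triangle> B \<in> DC E C0" using A by (auto simp: DC_feas[OF fin] symdiff_def)
        thus "B \<in> twist (DC E C0) A" unfolding twist_def by (metis image_eqI symdiff_invol)
      qed
    qed
    finally show ?thesis .
  qed
  have "feas ?L {}" using nm Fchar by (auto simp: normal_def)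
  then obtain C' where C': "sym_matrix_on E C'" "?L = Lg E C'"
    using normal_twist_Lg[OF fin sm0] by blast
  have "F = DC E C'" using Fchar C' DC_feas[OF fin] by simp
  thus ?thesis using C' by blast
qed



lemma sub2: "X \<subseteq> {i,j} \<longleftrightarrow> X = {} \<or> X = {i} \<or> X = {j} \<or> X = {i,j}"
  by blast

lemma single_filter: "card {l\<in>{a}. P l} = (if P a then 1 else 0)"
proof -
  have "{l\<in>{a}. P l} = (if P a then {a} else {})" by auto
  thus ?thesis by simp
qed

lemma pair_filter: "a \<noteq> b \<Longrightarrow> card {l\<in>{a,b}. P l} = (if P a then 1 else 0) + (if P b then 1 else 0)"
proof -
  assume ab: "a \<noteq> b"
  have "{l\<in>{a,b}. P l} = (if P a then {a} else {}) \<union> (if P b then {b} else {})" by auto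
  thus ?thesis using ab by (cases "P a"; cases "P b"; simp)
qed

lemma ns1: "nonsingular_principal C {i} \<longleftrightarrow> C i i"
proof -
  have "nonsingular_principal C {i} \<longleftrightarrow> (\<forall>X. (X = {} \<or> X = {i}) \<longrightarrow> (\<forall>k\<in>{i}. even (card {l\<in>X. C k l})) \<longrightarrow> X = {})"
    unfolding nonsingular_principal_def subset_singleton_iff by blast
  also have "\<dots> \<longleftrightarrow> \<not> (even (card {l\<in>{i}. C i l}))" by auto
  also have "\<dots> \<longleftrightarrow> C i i" unfolding single_filter by simp
  finally show ?thesis .
qed

lemma ns2:
  assumes ij: "i \<noteq> j" and s: "C i j = C j i"
  shows "nonsingular_principal C {i,j} \<longleftrightarrow> ((C i i \<and> C j j) \<noteq> C i j)"
proof -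
  have "nonsingular_principal C {i,j} \<longleftrightarrow> (\<forall>X. (X = {} \<or> X = {i} \<or> X = {j} \<or> X = {i,j}) \<longrightarrow> (\<forall>k\<in>{i,j}. even (card {l\<in>X. C k l})) \<longrightarrow> X = {})"
    unfolding nonsingular_principal_def sub2 by blast
  also have "\<dots> \<longleftrightarrow> \<not> (\<forall>k\<in>{i,j}. even (card {l\<in>{i}. C k l})) \<and> \<not> (\<forall>k\<in>{i,j}. even (card {l\<in>{j}. C k l}))
      \<and> \<not> (\<forall>k\<in>{i,j}. even (card {l\<in>{i,j}. C k l}))" using ij by auto
  also have "\<dots> \<longleftrightarrow> ((C i i \<and> C j j) \<noteq> C i j)"
    unfolding single_filter pair_filter[OF ij] using ij s by (cases "C i i"; cases "C j j"; cases "C i j"; simp)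
  finally show ?thesis .
qed

lemma DC_unique:
  assumes "sym_matrix_on E C1" "sym_matrix_on E C2" "DC E C1 = DC E C2"
  shows "C1 = C2"
proof (intro ext)
  fix i j
  show "C1 i j = C2 i j"
  proof (cases "i \<in> E \<and> j \<in> E")
    case False thus ?thesis using assms(1,2) by (auto simp: sym_matrix_on_def)
  next
    case True
    have d: "C1 k k = C2 k k" if "k \<in> E" for k
    proof -
      have "{k} \<in> DC E C1 \<longleftrightarrow> {k} \<in> DC E C2" using assms(3) by simp
      thus ?thesis using that by (simp add: DC_def ns1)
    qed
    show ?thesis
    proof (cases "i = j")
      case True thus ?thesis using d \<open>i \<in> E \<and> j \<in> E\<close> by simp
    next
      case False
      have "{i,j} \<in> DC E C1 \<longleftrightarrow> {i,j} \<in> DC E C2" using assms(3) by simp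
      hence "nonsingular_principal C1 {i,j} \<longleftrightarrow> nonsingular_principal C2 {i,j}"
        using True by (simp add: DC_def)
      thus ?thesis using ns2[OF False, of C1] ns2[OF False, of C2] assms(1,2) d True
        by (auto simp: sym_matrix_on_def)
    qed
  qed
qed



lemma nonsing_K:
  assumes "finite E" "B \<subseteq> E"
  shows "nonsingular_principal (\<lambda>u w. u \<in> E \<and> w \<in> E \<and> u \<noteq> w) B \<longleftrightarrow> even (card B)"
proof -
  have fB: "finite B" using assms finite_subset by auto
  have cX: "{j\<in>X. i \<in> E \<and> j \<in> E \<and> i \<noteq> j} = X - {i}" if "X \<subseteq> B" "i \<in> B" for X i
    using that assms by auto
  show ?thesis
  proof
    assume h: "nonsingular_principal (\<lambda>u w. u \<in> E \<and> w \<in> E \<and> u \<noteq> w) B"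
    show "even (card B)"
    proof (rule ccontr)
      assume o: "odd (card B)"
      hence "B \<noteq> {}" by auto
      have "\<forall>i\<in>B. even (card {j\<in>B. i \<in> E \<and> j \<in> E \<and> i \<noteq> j})"
        using cX[of B] o fB by (simp add: card_Diff_singleton)
      thus False using h \<open>B \<noteq> {}\<close> unfolding nonsingular_principal_def by blast
    qed
  next
    assume e: "even (card B)"
    show "nonsingular_principal (\<lambda>u w. u \<in> E \<and> w \<in> E \<and> u \<noteq> w) B"
      unfolding nonsingular_principal_def
    proof (intro allI impI)
      fix X assume X: "X \<subseteq> B" and ev: "\<forall>i\<in>B. even (card {j\<in>X. i \<in> E \<and> j \<in> E \<and> i \<noteq> j})"
      have fX: "finite X" using X fB finite_subset by auto
      show "X = {}"
      proof (rule ccontr)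
        assume "X \<noteq> {}"
        then obtain i where i: "i \<in> X" by auto
        have iB: "i \<in> B" using i X by blast
        have "even (card {j\<in>X. i \<in> E \<and> j \<in> E \<and> i \<noteq> j})" using ev iB by blast
        hence "even (card (X - {i}))" by (simp only: cX[OF X iB])
        moreover have "card X = Suc (card (X - {i}))" using card_Suc_Diff1[OF fX i] by simp
        ultimately have oX: "odd (card X)" by simp
        have "X = B"
        proof (rule ccontr)
          assume "X \<noteq> B"
          then obtain k where k: "k \<in> B" "k \<notin> X" using X by auto
          have "even (card {j\<in>X. k \<in> E \<and> j \<in> E \<and> k \<noteq> j})" using ev k by blast
          hence "even (card (X - {k}))" by (simp only: cX[OF X k(1)])
          thus False using oX k by simp
        qed
        thus False using oX e by simp
      qed
    qed
  qed
qed



lemma twist_even: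
  assumes fin: "finite E" and A: "A \<subseteq> E"
  shows "twist {B. B \<subseteq> E \<and> even (card B)} A = {X. X \<subseteq> E \<and> (even (card X) = even (card A))}"
proof
  show "twist {B. B \<subseteq> E \<and> even (card B)} A \<subseteq> {X. X \<subseteq> E \<and> (even (card X) = even (card A))}"
  proof
    fix X assume "X \<in> twist {B. B \<subseteq> E \<and> even (card B)} A"
    then obtain B where B: "B \<subseteq> E" "even (card B)" "X = A \<triangle> B" by (auto simp: twist_def)
    have fA: "finite A" "finite B" using A B fin finite_subset by auto
    show "X \<in> {X. X \<subseteq> E \<and> (even (card X) = even (card A))}"
      using B A even_card_symdiff[OF fA] by (auto simp: symdiff_def)
  qed
next
  show "{X. X \<subseteq> E \<and> (even (card X) = even (card A))} \<subseteq> twist {B. B \<subseteq> E \<and> even (card B)} A"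
  proof
    fix X assume X: "X \<in> {X. X \<subseteq> E \<and> (even (card X) = even (card A))}"
    have fA: "finite A" "finite X" using A X fin finite_subset by auto
    have "A \<triangle> X \<subseteq> E" "even (card (A \<triangle> X))" using X A even_card_symdiff[OF fA] by (auto simp: symdiff_def)
    thus "X \<in> twist {B. B \<subseteq> E \<and> even (card B)} A" unfolding twist_def
      by (metis (mono_tags, lifting) image_eqI mem_Collect_eq symdiff_invol)
  qed
qed

lemma width_par:
  assumes fin: "finite E" and ne: "E \<noteq> {}"
  shows "width {X. X \<subseteq> E \<and> (even (card X) = b)} =
    (if odd (card E) then card E - 1 else if b then card E else card E - 2)"
proof -
  let ?P = "{X. X \<subseteq> E \<and> (even (card X) = b)}"
  obtain e where e: "e \<in> E" using ne by auto
  have fP: "finite (card ` ?P)" using fin by simp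
  have cE: "card E \<ge> 1" using fin ne by (simp add: Suc_le_eq card_gt_0_iff)
  have le: "\<forall>x\<in>card ` ?P. x \<le> card E" using fin by (auto intro: card_mono)
  have ce1: "card (E - {e}) = card E - 1" using e fin by simp
  have mx: "Max (card ` ?P) = (if even (card E) = b then card E else card E - 1)"
  proof (cases "even (card E) = b")
    case True
    thus ?thesis using le fP by (intro Max_eqI) auto
  next
    case False
    have w: "E - {e} \<in> ?P" using False ce1 cE by auto
    have bd: "\<forall>x\<in>card ` ?P. x \<le> card E - 1"
    proof
      fix x assume "x \<in> card ` ?P"
      then obtain X where "X \<in> ?P" "x = card X" by auto
      hence "x \<le> card E" "x \<noteq> card E" using fin False by (auto intro: card_mono)
      thus "x \<le> card E - 1" by simp
    qed
    have mem: "card E - 1 \<in> card ` ?P" using image_eqI[where f=card, OF ce1[symmetric] w] .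
    have "Max (card ` ?P) = card E - 1" by (rule Max_eqI[OF fP]) (use bd in blast, rule mem)
    thus ?thesis using False by simp
  qed
  have mn: "Min (card ` ?P) = (if b then 0 else 1)"
  proof (cases b)
    case True
    have w: "{} \<in> ?P" using True by simp
    have c0: "card {} = (0::nat)" by simp
    have mem: "0 \<in> card ` ?P" using image_eqI[where f=card, OF c0[symmetric] w] .
    have "Min (card ` ?P) = 0" by (rule Min_eqI[OF fP]) (simp, rule mem)
    thus ?thesis using True by simp
  next
    case False
    have w: "{e} \<in> ?P" using False e by simp
    have bd: "\<forall>x\<in>card ` ?P. 1 \<le> x"
    proof
      fix x assume "x \<in> card ` ?P"
      then obtain X where "X \<in> ?P" "x = card X" by auto
      hence "odd x" using False by simp
      thus "1 \<le> x" by (cases x) auto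
    qed
    have c1: "card {e} = 1" by simp
    have mem: "1 \<in> card ` ?P" using image_eqI[where f=card, OF c1[symmetric] w] .
    have "Min (card ` ?P) = 1" by (rule Min_eqI[OF fP]) (use bd in blast, rule mem)
    thus ?thesis using False by simp
  qed
  show ?thesis unfolding width_def mx mn using cE by auto
qed



lemma ofnat_monom: "(of_nat n :: int poly) * monom 1 k = monom (of_nat n) k"
proof (induction n)
  case 0 show ?case by simp
next
  case (Suc n)
  have "(of_nat (Suc n) :: int poly) * monom 1 k = monom 1 k + of_nat n * monom 1 k"
    by (simp add: distrib_right)
  also have "\<dots> = monom 1 k + monom (of_nat n) k" using Suc by simp
  also have "\<dots> = monom (1 + of_nat n) k" by (simp only: add_monom)
  finally show ?case by simp
qed
lemma sum_monom_const: "finite S \<Longrightarrow> (\<Sum>A\<in>S. monom (1::int) k) = monom (of_nat (card S)) k"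
  by (simp only: sum_constant ofnat_monom)

lemma count_even:
  assumes fin: "finite E" and ne: "E \<noteq> {}"
  shows "card {A\<in>Pow E. even (card A)} = 2 ^ (card E - 1)"
    "card {A\<in>Pow E. \<not> even (card A)} = 2 ^ (card E - 1)"
proof -
  obtain e where e: "e \<in> E" using ne by auto
  let ?h = "\<lambda>X. X \<triangle> {e}"
  have par: "even (card (X \<triangle> {e})) = (\<not> even (card X))" if "X \<subseteq> E" for X
    using even_card_symdiff[of X "{e}"] that fin finite_subset by auto
  have "bij_betw ?h {A\<in>Pow E. even (card A)} {A\<in>Pow E. \<not> even (card A)}"
  proof (rule bij_betw_byWitness[where f' = ?h])
    show "\<forall>a\<in>{A \<in> Pow E. even (card A)}. a \<triangle> {e} \<triangle> {e} = a" by (auto simp: symdiff_def)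
    show "\<forall>a\<in>{A \<in> Pow E. \<not> even (card A)}. a \<triangle> {e} \<triangle> {e} = a" by (auto simp: symdiff_def)
    show "?h ` {A \<in> Pow E. even (card A)} \<subseteq> {A \<in> Pow E. \<not> even (card A)}"
      using par e by (auto simp: symdiff_def)
    show "?h ` {A \<in> Pow E. \<not> even (card A)} \<subseteq> {A \<in> Pow E. even (card A)}"
      using par e by (auto simp: symdiff_def)
  qed
  hence eq: "card {A\<in>Pow E. even (card A)} = card {A\<in>Pow E. \<not> even (card A)}" by (rule bij_betw_same_card)
  have "card {A\<in>Pow E. even (card A)} + card {A\<in>Pow E. \<not> even (card A)} = card (Pow E)"
    using fin by (subst card_Un_disjoint[symmetric]) (auto intro: arg_cong[where f=card])
  hence tot: "card {A\<in>Pow E. even (card A)} + card {A\<in>Pow E. \<not> even (card A)} = 2 ^ card E"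
    using fin by (simp add: card_Pow)
  have "card E \<ge> 1" using fin ne by (simp add: Suc_le_eq card_gt_0_iff)
  hence "(2::nat) ^ card E = 2 * 2 ^ (card E - 1)" by (metis Suc_diff_le diff_Suc_1 power_Suc)
  thus "card {A\<in>Pow E. even (card A)} = 2 ^ (card E - 1)"
    "card {A\<in>Pow E. \<not> even (card A)} = 2 ^ (card E - 1)" using eq tot by auto
qed



theorem mainTheorem5:
  fixes E :: "'a set" and F :: "'a set set" and v :: nat
  assumes "delta_matroid E F" and "normal F" and "binary_dm E F"
    and "card E = v" and "v \<ge> 1"
    and "\<forall>u\<in>E. \<forall>w\<in>E. intersection_matrix E F u w = (u \<noteq> w)"
  shows "twist_poly E F =
    (if odd v then monom (2 ^ v) (v - 1)
     else monom (2 ^ (v - 1)) v + monom (2 ^ (v - 1)) (v - 2))"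
proof -
  have fin: "finite E" using assms(1) by (simp add: delta_matroid_def)
  have ne: "E \<noteq> {}" using assms(4,5) by auto
  obtain C' where C': "sym_matrix_on E C'" "F = DC E C'"
    using normal_binary_DC[OF assms(1-3)] by blast
  have im: "intersection_matrix E F = C'"
    unfolding intersection_matrix_def
    by (rule the_equality) (use C' DC_unique in auto)
  define K where "K = (\<lambda>u w. u \<in> E \<and> w \<in> E \<and> u \<noteq> w)"
  have "C' = K"
  proof (intro ext)
    fix u w show "C' u w = K u w"
    proof (cases "u \<in> E \<and> w \<in> E")
      case True thus ?thesis using assms(6) im unfolding K_def by simp
    next
      case False
      hence "\<not> C' u w" using C'(1) unfolding sym_matrix_on_def by blast
      thus ?thesis using False unfolding K_def by blast
    qed
  qed
  hence Fe: "F = {B. B \<subseteq> E \<and> even (card B)}"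
    using C'(2) nonsing_K[OF fin] unfolding K_def by (auto simp: DC_def)
  have w: "width (twist F A) = (if odd v then v - 1 else if even (card A) then v else v - 2)"
    if "A \<in> Pow E" for A
    using Fe twist_even[OF fin, of A] that width_par[OF fin ne] assms(4) by simp
  have tp: "twist_poly E F = (\<Sum>A\<in>Pow E. monom 1 (if odd v then v - 1 else if even (card A) then v else v - 2))"
    unfolding twist_poly_def using w by (intro sum.cong) auto
  show ?thesis
  proof (cases "odd v")
    case True
    thus ?thesis using tp sum_monom_const[of "Pow E" "v - 1"] fin assms(4) by (simp add: card_Pow)
  next
    case False
    have "twist_poly E F = (\<Sum>A\<in>Pow E. if even (card A) then monom 1 v else monom 1 (v - 2))"
      unfolding tp using False by (intro sum.cong) auto
    also have "\<dots> = (\<Sum>A\<in>{A\<in>Pow E. even (card A)}. monom 1 v) + (\<Sum>A\<in>{A\<in>Pow E. \<not> even (card A)}. monom 1 (v - 2))"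
      using fin by (simp add: sum.If_cases Int_def)
    also have "\<dots> = monom (2 ^ (v - 1)) v + monom (2 ^ (v - 1)) (v - 2)"
    proof -
      have f1: "finite {A\<in>Pow E. even (card A)}" using fin by simp
      have f2: "finite {A\<in>Pow E. \<not> even (card A)}" using fin by simp
      have i: "(of_nat (2 ^ (v - 1)) :: int) = 2 ^ (v - 1)" by simp
      show ?thesis
        by (simp only: sum_monom_const[OF f1] sum_monom_const[OF f2] count_even[OF fin ne] assms(4) i)
    qed
    finally show ?thesis using False by simp
  qed
qed

end
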